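(* The map $\Lambda:\Xi\to\Psi:=\Lambda(\Xi)$ is a bijection, and in terms of $\psi=\Lambda(\Gamma(\theta))$ the log-likelihood of the observed data is $$L(\psi)=\sum_{k=1}^K n_k\log\xi_{S_k}(\psi)+\sum_{i\in E}n_i(1)\,\psi_i ,$$ where $\xi(\psi)=\Lambda^{-1}(\psi)$. Equivalently, in terms of $\xi\in\Xi$, $$L(\xi)=\sum_{i\in E}\Big[n_i(1)\log\frac{1-\xi_i}{1-\prod_{j\in C_i}\xi_j}+n_i(0)\log\xi_i\Big],$$ with the convention that the empty product over $C_i=\emptyset$ equals $0$. Moreover, for non-leaf $i$, $\psi_i=\log P(X_i=1\mid \text{probe at tail of } i,\ X_r=0\ \forall r\in R_i)$.
   Context: Network: a finite set of directed links $E=\{1,\dots,m\}$ between nodes, forming a directed acyclic graph. For a link $i$, $C_i$ is the set of links whose tail is the head of $i$ (child links); $B_i$ is the set of links having the same tail as $i$ (brother links, including $i$ itself); $F_i$ is the set of links whose head is the tail of $i$ (parent links). A link $i$ is a leaf link if $C_i=\emptyset$; $R$ is the set of leaf links, and $R_i$ is the set of leaf links that are descendants of $i$ (including $i$ itself if $i$ is a leaf). The network is covered by $K\ge1$ multicast trees $T_1,\dots,T_K$: $T_k$ has a root link $S_k$ whose tail is a source node with no incoming link ($F_{S_k}=\emptyset$); its link set $E_k$ consists of $S_k$ and all descendants of $S_k$; every link $i\in E_k\setminus\{S_k\}$ has exactly one parent link in $E_k$, denoted $f^{(k)}_i\in F_i\cap E_k$; every link belongs to some $E_k$; each root link $S_k$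 belongs only to $E_k$. Write $\mathscr S=\{S_1,\dots,S_K\}$. Loss model: each link $i$ has loss rate $\theta_i$, $\theta\in\Theta=(0,1)^m$. From the source of tree $T_k$, $n_k$ probes are sent. For probe $t$ in tree $k$ and $i\in E_k$, $X^{(k,t)}_i=1$ if the probe reached the head of link $i$ and $0$ otherwise. A probe at the tail of link $i$ (i.e., $i=S_k$, or $X^{(k,t)}_{f^{(k)}_i}=1$) traverses link $i$ with probability $1-\theta_i$, independently across links, probes and trees; a probe not at the tail of $i$ does not reach its head. Only $X^{(k,t)}_r$ for leaf links $r\in R\cap E_k$ are observed; the log-likelihood is the log-probability of the observed data. Internal views: $Y^{(k,t)}_i=\max_{r\in R_i}X^{(k,t)}_r$ for $i\in E_k$; $n_{k,i}(1)=\sum_{t=1}^{n_k}Y^{(k,t)}_i$ for $i\in E_k$ and $0$ for $i\notin E_k$; $n_{k,S_k}(0)=n_k-n_{k,S_k}(1)$, $n_{k,i}(0)=n_{k,f^{(k)}_i}(1)-n_{k,i}(1)$ for $i\in E_k\setminus\{S_k\}$, and $0$ for $i\notin E_k$; $n_i(1)=\sum_k n_{k,i}(1)$, $n_i(0)=\sum_k n_{k,i}(0)$. Parameter systems: $\xi_i(\theta)=\theta_i$ for leaf $i$ and $\xi_i(\theta)=\theta_i+(1-\theta_i)\prod_{j\in C_i}\xi_j(\theta)$ otherwise (recursively from the leaves); $\Gamma(\theta)=(\xi_i(\theta))_i$, $\Xi=\Gamma(\Theta)$, with inverse $\theta_i(\xi)=\xi_i$ for leaf $i$ and $\theta_i(\xi)=(\xi_i-\prod_{j\in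 C_i}\xi_j)/(1-\prod_{j\in C_i}\xi_j)$ otherwise. For $\xi\in\Xi$ define $\Lambda(\xi)=\psi$ by $\psi_i=\log\frac{1-\theta_i(\xi)}{\xi_i}$ for leaf $i$ and $\psi_i=\log\frac{\xi_i-\theta_i(\xi)}{\xi_i}$ for non-leaf $i$. *)

theory Defs
  imports "HOL-Analysis.Analysis"
begin

text \<open>Network: finite link set E, each link i has a tail node tal i and a head node hed i.\<close>

definition children :: "('l \<Rightarrow> 'v) \<Rightarrow> ('l \<Rightarrow> 'v) \<Rightarrow> 'l set \<Rightarrow> 'l \<Rightarrow> 'l set" where
  "children hed tal E i = {j \<in> E. tal j = hed i}"

definition parents :: "('l \<Rightarrow> 'v) \<Rightarrow> ('l \<Rightarrow> 'v) \<Rightarrow> 'l set \<Rightarrow> 'l \<Rightarrow> 'l set" where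
  "parents hed tal E i = {j \<in> E. hed j = tal i}"

definition is_leaf :: "('l \<Rightarrow> 'v) \<Rightarrow> ('l \<Rightarrow> 'v) \<Rightarrow> 'l set \<Rightarrow> 'l \<Rightarrow> bool" where
  "is_leaf hed tal E i \<longleftrightarrow> children hed tal E i = {}"

definition leaves :: "('l \<Rightarrow> 'v) \<Rightarrow> ('l \<Rightarrow> 'v) \<Rightarrow> 'l set \<Rightarrow> 'l set" where
  "leaves hed tal E = {i \<in> E. is_leaf hed tal E i}"

definition child_rel :: "('l \<Rightarrow> 'v) \<Rightarrow> ('l \<Rightarrow> 'v) \<Rightarrow> 'l set \<Rightarrow> ('l \<times> 'l) set" where
  "child_rel hed tal E = {(i, j). i \<in> E \<and> j \<in> E \<and> tal j = hed i}"

definition descendants :: "('l \<Rightarrow> 'v) \<Rightarrow> ('l \<Rightarrow> 'v) \<Rightarrow> 'l set \<Rightarrow> 'l \<Rightarrow> 'l set" where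
  "descendants hed tal E i = {j. (i, j) \<in> (child_rel hed tal E)\<^sup>*}"

text \<open>R_i: leaf links that are descendants of i (including i if it is a leaf).\<close>
definition leaf_desc :: "('l \<Rightarrow> 'v) \<Rightarrow> ('l \<Rightarrow> 'v) \<Rightarrow> 'l set \<Rightarrow> 'l \<Rightarrow> 'l set" where
  "leaf_desc hed tal E i = descendants hed tal E i \<inter> leaves hed tal E"

definition tree_parent :: "('l \<Rightarrow> 'v) \<Rightarrow> ('l \<Rightarrow> 'v) \<Rightarrow> 'l set \<Rightarrow> 'l set \<Rightarrow> 'l \<Rightarrow> 'l" where
  "tree_parent hed tal E A j = (THE p. p \<in> parents hed tal E j \<inter> A)"

text \<open>Standing assumptions: a DAG covered by K multicast trees with root links S 1, ..., S K;
  E_k = descendants of S k.\<close>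
definition multicast_network ::
  "('l \<Rightarrow> 'v) \<Rightarrow> ('l \<Rightarrow> 'v) \<Rightarrow> 'l set \<Rightarrow> nat \<Rightarrow> (nat \<Rightarrow> 'l) \<Rightarrow> bool" where
  "multicast_network hed tal E K S \<longleftrightarrow>
     finite E \<and>
     acyclic {(tal i, hed i) | i. i \<in> E} \<and>
     K \<ge> 1 \<and>
     (\<forall>k \<in> {1..K}. S k \<in> E \<and> parents hed tal E (S k) = {}) \<and>
     (\<forall>k \<in> {1..K}. \<forall>i \<in> descendants hed tal E (S k) - {S k}.
         \<exists>!p. p \<in> parents hed tal E i \<inter> descendants hed tal E (S k)) \<and>
     (\<forall>i \<in> E. \<exists>k \<in> {1..K}. i \<in> descendants hed tal E (S k)) \<and>
     (\<forall>k \<in> {1..K}. \<forall>l \<in> {1..K}. S k \<in> descendants hed tal E (S l) \<longrightarrow> l = k)"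

definition Theta_space :: "'l set \<Rightarrow> ('l \<Rightarrow> real) set" where
  "Theta_space E = E \<rightarrow>\<^sub>E {0<..<1}"

definition Gamma :: "('l \<Rightarrow> 'v) \<Rightarrow> ('l \<Rightarrow> 'v) \<Rightarrow> 'l set \<Rightarrow> ('l \<Rightarrow> real) \<Rightarrow> ('l \<Rightarrow> real)" where
  "Gamma hed tal E \<theta> = (THE g. g \<in> extensional E \<and>
      (\<forall>i \<in> E. g i = (if is_leaf hed tal E i then \<theta> i
                       else \<theta> i + (1 - \<theta> i) * (\<Prod>j \<in> children hed tal E i. g j))))"

definition Xi_space :: "('l \<Rightarrow> 'v) \<Rightarrow> ('l \<Rightarrow> 'v) \<Rightarrow> 'l set \<Rightarrow> ('l \<Rightarrow> real) set" where
  "Xi_space hed tal E = Gamma hed tal E ` Theta_space E"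

definition theta_of :: "('l \<Rightarrow> 'v) \<Rightarrow> ('l \<Rightarrow> 'v) \<Rightarrow> 'l set \<Rightarrow> ('l \<Rightarrow> real) \<Rightarrow> 'l \<Rightarrow> real" where
  "theta_of hed tal E \<xi> i = (if is_leaf hed tal E i then \<xi> i
     else (\<xi> i - (\<Prod>j \<in> children hed tal E i. \<xi> j)) / (1 - (\<Prod>j \<in> children hed tal E i. \<xi> j)))"

definition Lambda :: "('l \<Rightarrow> 'v) \<Rightarrow> ('l \<Rightarrow> 'v) \<Rightarrow> 'l set \<Rightarrow> ('l \<Rightarrow> real) \<Rightarrow> ('l \<Rightarrow> real)" where
  "Lambda hed tal E \<xi> = restrict (\<lambda>i. if is_leaf hed tal E i
        then ln ((1 - theta_of hed tal E \<xi> i) / \<xi> i)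
        else ln ((\<xi> i - theta_of hed tal E \<xi> i) / \<xi> i)) E"

text \<open>For a link set A forming a tree with root link a, and a set U \<subseteq> A of links
  whose head is reached by the probe (X_i = 1 iff i \<in> U), the probability of this configuration
  given that the probe is at the tail of a: each link whose tail is reached is traversed with
  probability 1 - theta_i independently; a link whose tail is not reached is not traversed.\<close>
definition config_prob ::
  "('l \<Rightarrow> 'v) \<Rightarrow> ('l \<Rightarrow> 'v) \<Rightarrow> 'l set \<Rightarrow> ('l \<Rightarrow> real) \<Rightarrow> 'l set \<Rightarrow> 'l \<Rightarrow> 'l set \<Rightarrow> real" where
  "config_prob hed tal E \<theta> A a U =
     (\<Prod>i \<in> A. if i = a \<or> tree_parent hed tal E A i \<in> U
                then (if i \<in> U then 1 - \<theta> i else \<theta> i)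
                else (if i \<in> U then 0 else 1))"

definition tree_prob ::
  "('l \<Rightarrow> 'v) \<Rightarrow> ('l \<Rightarrow> 'v) \<Rightarrow> 'l set \<Rightarrow> ('l \<Rightarrow> real) \<Rightarrow> 'l set \<Rightarrow> 'l \<Rightarrow> ('l set \<Rightarrow> bool) \<Rightarrow> real" where
  "tree_prob hed tal E \<theta> A a P = (\<Sum>U \<in> {U. U \<subseteq> A \<and> P U}. config_prob hed tal E \<theta> A a U)"

text \<open>Log-likelihood of the observed data: obs k t is the set of leaf links of tree k reached by
  probe t (only its intersection with the leaf links of E_k is used); n k probes in tree k.\<close>
definition loglik ::
  "('l \<Rightarrow> 'v) \<Rightarrow> ('l \<Rightarrow> 'v) \<Rightarrow> 'l set \<Rightarrow> nat \<Rightarrow> (nat \<Rightarrow> 'l) \<Rightarrow> (nat \<Rightarrow> nat)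
     \<Rightarrow> (nat \<Rightarrow> nat \<Rightarrow> 'l set) \<Rightarrow> ('l \<Rightarrow> real) \<Rightarrow> real" where
  "loglik hed tal E K S n obs \<theta> =
     (\<Sum>k \<in> {1..K}. \<Sum>t \<in> {1..n k}.
        ln (tree_prob hed tal E \<theta> (descendants hed tal E (S k)) (S k)
              (\<lambda>U. U \<inter> leaves hed tal E = obs k t \<inter> leaves hed tal E \<inter> descendants hed tal E (S k))))"

definition cnt1 ::
  "('l \<Rightarrow> 'v) \<Rightarrow> ('l \<Rightarrow> 'v) \<Rightarrow> 'l set \<Rightarrow> nat \<Rightarrow> (nat \<Rightarrow> 'l) \<Rightarrow> (nat \<Rightarrow> nat)
     \<Rightarrow> (nat \<Rightarrow> nat \<Rightarrow> 'l set) \<Rightarrow> nat \<Rightarrow> 'l \<Rightarrow> real" where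
  "cnt1 hed tal E K S n obs k i =
     (if k \<in> {1..K} \<and> i \<in> descendants hed tal E (S k)
      then real (card {t \<in> {1..n k}. leaf_desc hed tal E i \<inter> obs k t \<noteq> {}})
      else 0)"

definition cnt0 ::
  "('l \<Rightarrow> 'v) \<Rightarrow> ('l \<Rightarrow> 'v) \<Rightarrow> 'l set \<Rightarrow> nat \<Rightarrow> (nat \<Rightarrow> 'l) \<Rightarrow> (nat \<Rightarrow> nat)
     \<Rightarrow> (nat \<Rightarrow> nat \<Rightarrow> 'l set) \<Rightarrow> nat \<Rightarrow> 'l \<Rightarrow> real" where
  "cnt0 hed tal E K S n obs k i =
     (if k \<in> {1..K} \<and> i = S k then real (n k) - cnt1 hed tal E K S n obs k i
      else if k \<in> {1..K} \<and> i \<in> descendants hed tal E (S k)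
      then cnt1 hed tal E K S n obs k (tree_parent hed tal E (descendants hed tal E (S k)) i)
           - cnt1 hed tal E K S n obs k i
      else 0)"

definition N1 ::
  "('l \<Rightarrow> 'v) \<Rightarrow> ('l \<Rightarrow> 'v) \<Rightarrow> 'l set \<Rightarrow> nat \<Rightarrow> (nat \<Rightarrow> 'l) \<Rightarrow> (nat \<Rightarrow> nat)
     \<Rightarrow> (nat \<Rightarrow> nat \<Rightarrow> 'l set) \<Rightarrow> 'l \<Rightarrow> real" where
  "N1 hed tal E K S n obs i = (\<Sum>k \<in> {1..K}. cnt1 hed tal E K S n obs k i)"

definition N0 ::
  "('l \<Rightarrow> 'v) \<Rightarrow> ('l \<Rightarrow> 'v) \<Rightarrow> 'l set \<Rightarrow> nat \<Rightarrow> (nat \<Rightarrow> 'l) \<Rightarrow> (nat \<Rightarrow> nat)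
     \<Rightarrow> (nat \<Rightarrow> nat \<Rightarrow> 'l set) \<Rightarrow> 'l \<Rightarrow> real" where
  "N0 hed tal E K S n obs i = (\<Sum>k \<in> {1..K}. cnt0 hed tal E K S n obs k i)"

definition cond_prob_pass ::
  "('l \<Rightarrow> 'v) \<Rightarrow> ('l \<Rightarrow> 'v) \<Rightarrow> 'l set \<Rightarrow> ('l \<Rightarrow> real) \<Rightarrow> 'l \<Rightarrow> real" where
  "cond_prob_pass hed tal E \<theta> i =
     tree_prob hed tal E \<theta> (descendants hed tal E i) i
        (\<lambda>U. i \<in> U \<and> U \<inter> leaf_desc hed tal E i = {})
   / tree_prob hed tal E \<theta> (descendants hed tal E i) i
        (\<lambda>U. U \<inter> leaf_desc hed tal E i = {})"

end

theory Submission
  imports Defs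
begin


lemma sum_pow_bin:
  fixes f g :: "'a set \<Rightarrow> real"
  assumes "finite B" "finite D" "B \<inter> D = {}"
  shows "(\<Sum>V\<in>Pow (B \<union> D). f (V \<inter> B) * g (V \<inter> D)) = (\<Sum>X\<in>Pow B. f X) * (\<Sum>Y\<in>Pow D. g Y)"
proof -
  have key: "\<And>X Y. X \<subseteq> B \<Longrightarrow> Y \<subseteq> D \<Longrightarrow> (X \<union> Y) \<inter> B = X \<and> (X \<union> Y) \<inter> D = Y"
    using assms by blast
  have "(\<Sum>X\<in>Pow B. f X) * (\<Sum>Y\<in>Pow D. g Y) = (\<Sum>X\<in>Pow B. \<Sum>Y\<in>Pow D. f X * g Y)"
    by (simp add: sum_product)
  also have "\<dots> = (\<Sum>(X,Y)\<in>Pow B \<times> Pow D. f X * g Y)"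
    by (simp add: sum.cartesian_product)
  also have "\<dots> = (\<Sum>V\<in>Pow (B \<union> D). f (V \<inter> B) * g (V \<inter> D))"
  proof (rule sum.reindex_bij_witness[where i="\<lambda>V. (V \<inter> B, V \<inter> D)" and j="\<lambda>(X,Y). X \<union> Y"])
  qed (use assms key in auto)
  finally show ?thesis by simp
qed

lemma sum_pow_prod:
  fixes g :: "'i \<Rightarrow> 'a set \<Rightarrow> real"
  assumes "finite I" "\<And>j. j \<in> I \<Longrightarrow> finite (B j)"
    "\<And>i j. i \<in> I \<Longrightarrow> j \<in> I \<Longrightarrow> i \<noteq> j \<Longrightarrow> B i \<inter> B j = {}"
  shows "(\<Sum>V\<in>Pow (\<Union>j\<in>I. B j). \<Prod>j\<in>I. g j (V \<inter> B j)) = (\<Prod>j\<in>I. \<Sum>W\<in>Pow (B j). g j W)"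
  using assms
proof (induction I rule: finite_induct)
  case empty
  then show ?case by simp
next
  case (insert x I)
  let ?R = "\<Union>j\<in>I. B j"
  have disj: "B x \<inter> ?R = {}" using insert by blast
  have fin: "finite ?R" using insert by auto
  have "(\<Sum>V\<in>Pow (\<Union>j\<in>insert x I. B j). \<Prod>j\<in>insert x I. g j (V \<inter> B j))
      = (\<Sum>V\<in>Pow (B x \<union> ?R). g x (V \<inter> B x) * (\<lambda>W. \<Prod>j\<in>I. g j (W \<inter> B j)) (V \<inter> ?R))"
  proof (rule sum.cong)
    fix V assume "V \<in> Pow (B x \<union> ?R)"
    have "(\<Prod>j\<in>I. g j (V \<inter> B j)) = (\<Prod>j\<in>I. g j (V \<inter> ?R \<inter> B j))"
      by (rule prod.cong) (auto intro!: arg_cong[where f="g _"])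
    then show "(\<Prod>j\<in>insert x I. g j (V \<inter> B j)) = g x (V \<inter> B x) * (\<lambda>W. \<Prod>j\<in>I. g j (W \<inter> B j)) (V \<inter> ?R)"
      using insert by simp
  qed simp
  also have "\<dots> = (\<Sum>X\<in>Pow (B x). g x X) * (\<Sum>Y\<in>Pow ?R. \<Prod>j\<in>I. g j (Y \<inter> B j))"
    by (rule sum_pow_bin) (use insert disj fin in auto)
  also have "\<dots> = (\<Prod>j\<in>insert x I. \<Sum>W\<in>Pow (B j). g j W)"
    using insert by simp
  finally show ?case .
qed

lemma sum_pow_insert:
  fixes F :: "'a set \<Rightarrow> real"
  assumes "a \<notin> D" "finite D"
  shows "(\<Sum>V\<in>Pow (insert a D). F V) = (\<Sum>V\<in>Pow D. F V) + (\<Sum>V\<in>Pow D. F (insert a V))"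
proof -
  have inj: "inj_on (insert a) (Pow D)" using assms(1) by (auto simp: inj_on_def)
  have "(\<Sum>V\<in>Pow (insert a D). F V) = (\<Sum>V\<in>Pow D. F V) + (\<Sum>V\<in>insert a ` Pow D. F V)"
    unfolding Pow_insert using assms by (subst sum.union_disjoint) auto
  also have "(\<Sum>V\<in>insert a ` Pow D. F V) = (\<Sum>V\<in>Pow D. F (insert a V))"
    using inj by (simp add: sum.reindex)
  finally show ?thesis .
qed

lemma prod_pos_lt1:
  fixes f :: "'a \<Rightarrow> real"
  assumes "finite J" "J \<noteq> {}" "\<And>j. j \<in> J \<Longrightarrow> 0 < f j \<and> f j < 1"
  shows "0 < prod f J \<and> prod f J < 1"
  using assms
proof (induction J rule: finite_ne_induct)
  case (singleton x) then show ?case by simp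
next
  case (insert x F)
  then have a: "0 < f x" "f x < 1" "0 < prod f F" "prod f F < 1" by auto
  have "f x * prod f F < 1 * 1" using a by (intro mult_strict_mono) auto
  then show ?case using insert a by simp
qed

lemma prod_of_bool_real: "finite J \<Longrightarrow> (\<Prod>j\<in>J. (of_bool (P j) :: real)) = of_bool (\<forall>j\<in>J. P j)"
  by (induction J rule: finite_induct) auto




locale mnet =
  fixes hed :: "'l \<Rightarrow> 'v" and tal :: "'l \<Rightarrow> 'v" and E :: "'l set" and K :: nat and S :: "nat \<Rightarrow> 'l"
  assumes net: "multicast_network hed tal E K S"
begin

abbreviation "r \<equiv> child_rel hed tal E"
abbreviation "ch \<equiv> children hed tal E"
abbreviation "desc \<equiv> descendants hed tal E"
abbreviation "lvs \<equiv> leaves hed tal E"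
abbreviation "ldesc \<equiv> leaf_desc hed tal E"
abbreviation "leaf \<equiv> is_leaf hed tal E"
abbreviation "tp \<equiv> tree_parent hed tal E"

lemma finE: "finite E" using net unfolding multicast_network_def by auto
lemma acyc: "acyclic {(tal i, hed i) | i. i \<in> E}" using net unfolding multicast_network_def by auto
lemma S_in: "k \<in> {1..K} \<Longrightarrow> S k \<in> E" using net unfolding multicast_network_def by auto
lemma S_nopar: "k \<in> {1..K} \<Longrightarrow> parents hed tal E (S k) = {}" using net unfolding multicast_network_def by auto
lemma uniq0: "k \<in> {1..K} \<Longrightarrow> i \<in> desc (S k) - {S k} \<Longrightarrow> \<exists>!p. p \<in> parents hed tal E i \<inter> desc (S k)"
  using net unfolding multicast_network_def by auto
lemma cover: "i \<in> E \<Longrightarrow> \<exists>k\<in>{1..K}. i \<in> desc (S k)" using net unfolding multicast_network_def by auto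
lemma Sroot: "k \<in> {1..K} \<Longrightarrow> l \<in> {1..K} \<Longrightarrow> S k \<in> desc (S l) \<Longrightarrow> l = k"
  using net unfolding multicast_network_def by auto

lemma r_iff: "(i,j) \<in> r \<longleftrightarrow> i \<in> E \<and> j \<in> E \<and> tal j = hed i" by (simp add: child_rel_def)
lemma ch_iff: "j \<in> ch i \<longleftrightarrow> j \<in> E \<and> tal j = hed i" by (simp add: children_def)
lemma ch_r: "i \<in> E \<Longrightarrow> j \<in> ch i \<longleftrightarrow> (i,j) \<in> r" by (simp add: children_def child_rel_def)
lemma desc_iff: "l \<in> desc i \<longleftrightarrow> (i,l) \<in> r\<^sup>*" by (simp add: descendants_def)

lemma r_trancl_nodes: "(i,l) \<in> r\<^sup>+ \<Longrightarrow> (hed i, hed l) \<in> {(tal i, hed i) | i. i \<in> E}\<^sup>+"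
proof (induction rule: trancl_induct)
  case (base y)
  then have "(hed i, hed y) \<in> {(tal i, hed i) | i. i \<in> E}" by (auto simp: r_iff intro!: exI[of _ y])
  then show ?case by (rule r_into_trancl)
next
  case (step y z)
  then have "(hed y, hed z) \<in> {(tal i, hed i) | i. i \<in> E}" by (auto simp: r_iff intro!: exI[of _ z])
  with step show ?case by (meson trancl_into_trancl)
qed

lemma r_acyclic: "acyclic r"
  unfolding acyclic_def using r_trancl_nodes acyc unfolding acyclic_def by blast

lemma r_finite: "finite r"
proof -
  have "r \<subseteq> E \<times> E" by (auto simp: r_iff)
  then show ?thesis using finE finite_subset by blast
qed

lemma wf_r: "wf (r\<inverse>)" using finite_acyclic_wf_converse r_finite r_acyclic by blast

lemma E_induct[consumes 1, case_names step]:
  assumes "i \<in> E" and "\<And>i. i \<in> E \<Longrightarrow> (\<And>j. j \<in> ch i \<Longrightarrow> P j) \<Longrightarrow> P i"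
  shows "P i"
proof -
  have "i \<in> E \<longrightarrow> P i"
  proof (induction i rule: wf_induct_rule[OF wf_r])
    case (1 x)
    then show ?case using assms(2) by (auto simp: ch_iff r_iff)
  qed
  then show ?thesis using assms by blast
qed

lemma ch_sub: "ch i \<subseteq> E" by (auto simp: ch_iff)
lemma ch_fin: "finite (ch i)" using ch_sub finE finite_subset by blast
lemma desc_self: "i \<in> desc i" by (simp add: desc_iff)
lemma desc_sub: "i \<in> E \<Longrightarrow> desc i \<subseteq> E"
proof
  fix l assume "i \<in> E" "l \<in> desc i"
  then have "(i,l) \<in> r\<^sup>*" by (simp add: desc_iff)
  then show "l \<in> E" using \<open>i \<in> E\<close> by (induction rule: rtrancl_induct) (auto simp: r_iff)
qed
lemma desc_fin: "i \<in> E \<Longrightarrow> finite (desc i)" using desc_sub finE finite_subset by blast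
lemma desc_trans: "j \<in> desc i \<Longrightarrow> l \<in> desc j \<Longrightarrow> l \<in> desc i"
  by (auto simp: desc_iff)
lemma ch_desc: "i \<in> E \<Longrightarrow> j \<in> ch i \<Longrightarrow> j \<in> desc i"
  by (auto simp: desc_iff ch_r)

lemma desc_unfold: "i \<in> E \<Longrightarrow> desc i = insert i (\<Union>j\<in>ch i. desc j)"
proof (rule set_eqI, rule iffI)
  fix l assume i: "i \<in> E" and "l \<in> desc i"
  then have "(i,l) \<in> r\<^sup>*" by (simp add: desc_iff)
  then show "l \<in> insert i (\<Union>j\<in>ch i. desc j)"
  proof (cases rule: converse_rtranclE)
    case (step j)
    then show ?thesis using i by (auto simp: desc_iff ch_r)
  qed simp
next
  fix l assume "i \<in> E" "l \<in> insert i (\<Union>j\<in>ch i. desc j)"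
  then show "l \<in> desc i" using desc_self ch_desc desc_trans by blast
qed

lemma not_in_desc_child: "i \<in> E \<Longrightarrow> j \<in> ch i \<Longrightarrow> i \<notin> desc j"
proof
  assume "i \<in> E" "j \<in> ch i" "i \<in> desc j"
  then have "(i,j) \<in> r" "(j,i) \<in> r\<^sup>*" by (auto simp: ch_r desc_iff)
  then have "(i,i) \<in> r\<^sup>+" by (rule rtrancl_into_trancl2)
  then show False using r_acyclic unfolding acyclic_def by blast
qed

lemma desc_Ek: "k \<in> {1..K} \<Longrightarrow> i \<in> desc (S k) \<Longrightarrow> desc i \<subseteq> desc (S k)"
  using desc_trans by blast

lemma uniq: assumes "k \<in> {1..K}" "l \<in> desc (S k)" "p \<in> desc (S k)" "q \<in> desc (S k)" "(p,l) \<in> r" "(q,l) \<in> r"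
  shows "p = q"
proof -
  have pp: "p \<in> parents hed tal E l" "q \<in> parents hed tal E l" using assms(5,6) by (auto simp: r_iff parents_def)
  then have "l \<noteq> S k" using S_nopar[OF assms(1)] by auto
  then have "\<exists>!p. p \<in> parents hed tal E l \<inter> desc (S k)" using uniq0 assms by blast
  then show ?thesis using pp assms by blast
qed

lemma tp_eq: assumes "k \<in> {1..K}" "B \<subseteq> desc (S k)" "l \<in> B" "p \<in> B" "(p,l) \<in> r"
  shows "tp B l = p"
  unfolding tree_parent_def
proof (rule the_equality)
  show "p \<in> parents hed tal E l \<inter> B" using assms by (auto simp: parents_def r_iff)
  fix q assume "q \<in> parents hed tal E l \<inter> B"
  then have "(q,l) \<in> r" "q \<in> B" using assms by (auto simp: parents_def r_iff)
  then show "q = p" using uniq[of k l q p] assms by blast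
qed

lemma comparable: assumes k: "k \<in> {1..K}" and a: "a \<in> desc (S k)" and b: "b \<in> desc (S k)"
  and la: "l \<in> desc a" and lb: "l \<in> desc b"
  shows "a \<in> desc b \<or> b \<in> desc a"
proof -
  have "(a,l) \<in> r\<^sup>*" using la by (simp add: desc_iff)
  then show ?thesis using lb
  proof (induction rule: rtrancl_induct)
    case base
    then show ?case by simp
  next
    case (step m l)
    have "(b,l) \<in> r\<^sup>*" using step.prems by (simp add: desc_iff)
    then show ?case
    proof (cases rule: rtranclE)
      case base
      then show ?thesis using step by (auto simp: desc_iff intro: rtrancl_into_rtrancl)
    next
      case (step m')
      have "m \<in> desc (S k)" using step.hyps(1) a desc_trans by (auto simp: desc_iff)
      moreover have "m' \<in> desc (S k)" using step(1) b desc_trans by (auto simp: desc_iff)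
      moreover have "l \<in> desc (S k)" using \<open>(a,m) \<in> r\<^sup>*\<close> \<open>(m,l) \<in> r\<close> a desc_trans by (auto simp: desc_iff)
      ultimately have "m = m'" using uniq[OF k] \<open>(m,l) \<in> r\<close> \<open>(m',l) \<in> r\<close> by blast
      then show ?thesis using step.IH step(1) by (auto simp: desc_iff)
    qed
  qed
qed

lemma child_desc_eq: assumes i: "i \<in> E" and j1: "j1 \<in> ch i" and j2: "j2 \<in> ch i" and d: "j1 \<in> desc j2"
  shows "j1 = j2"
proof (rule ccontr)
  assume ne: "j1 \<noteq> j2"
  obtain k where k: "k \<in> {1..K}" "i \<in> desc (S k)" using cover i by blast
  have "(j2,j1) \<in> r\<^sup>*" using d by (simp add: desc_iff)
  then obtain m where m: "(j2,m) \<in> r\<^sup>*" "(m,j1) \<in> r" using ne by (cases rule: rtranclE) auto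
  have j2k: "j2 \<in> desc (S k)" using ch_desc[OF i j2] k desc_trans by blast
  have "m \<in> desc (S k)" using m(1) j2k desc_trans by (auto simp: desc_iff)
  moreover have "j1 \<in> desc (S k)" using ch_desc[OF i j1] k desc_trans by blast
  moreover have "(i,j1) \<in> r" using i j1 ch_r by blast
  ultimately have "m = i" using uniq[OF k(1)] k(2) m(2) by blast
  then have "i \<in> desc j2" using m(1) by (simp add: desc_iff)
  then show False using not_in_desc_child[OF i j2] by blast
qed

lemma desc_disj: assumes i: "i \<in> E" and "j1 \<in> ch i" "j2 \<in> ch i" "j1 \<noteq> j2"
  shows "desc j1 \<inter> desc j2 = {}"
proof (rule ccontr)
  assume "desc j1 \<inter> desc j2 \<noteq> {}"
  then obtain l where l: "l \<in> desc j1" "l \<in> desc j2" by blast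
  obtain k where k: "k \<in> {1..K}" "i \<in> desc (S k)" using cover i by blast
  have "j1 \<in> desc (S k)" "j2 \<in> desc (S k)" using ch_desc[OF i] assms k desc_trans by blast+
  then have "j1 \<in> desc j2 \<or> j2 \<in> desc j1" using comparable[OF k(1)] l by blast
  then show False using child_desc_eq[OF i] assms by blast
qed

lemma sum_desc: assumes "i \<in> E"
  shows "sum f (desc i) = f i + (\<Sum>j\<in>ch i. sum f (desc j))"
proof -
  have "sum f (desc i) = f i + sum f (\<Union>j\<in>ch i. desc j)"
    using desc_unfold[OF assms] not_in_desc_child[OF assms] desc_fin ch_sub ch_fin
    by (subst desc_unfold[OF assms], subst sum.insert) (auto intro: desc_fin ch_sub[THEN subsetD])
  also have "sum f (\<Union>j\<in>ch i. desc j) = (\<Sum>j\<in>ch i. sum f (desc j))"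
    using ch_fin desc_fin ch_sub desc_disj[OF assms] by (subst sum.UNION_disjoint) auto
  finally show ?thesis .
qed

lemma prod_desc: assumes "i \<in> E"
  shows "prod f (desc i) = f i * (\<Prod>j\<in>ch i. prod f (desc j))"
proof -
  have "prod f (desc i) = f i * prod f (\<Union>j\<in>ch i. desc j)"
    using desc_unfold[OF assms] not_in_desc_child[OF assms] desc_fin ch_sub ch_fin
    by (subst desc_unfold[OF assms], subst prod.insert) (auto intro: desc_fin ch_sub[THEN subsetD])
  also have "prod f (\<Union>j\<in>ch i. desc j) = (\<Prod>j\<in>ch i. prod f (desc j))"
    using ch_fin desc_fin ch_sub desc_disj[OF assms] by (subst prod.UNION_disjoint) auto
  finally show ?thesis .
qed

lemma tp_desc: assumes i: "i \<in> E" and l: "l \<in> desc i" "l \<noteq> i" and a: "a \<in> E" "i \<in> desc a"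
  shows "tp (desc a) l = tp (desc i) l \<and> tp (desc i) l \<in> desc i \<and> (tp (desc i) l, l) \<in> r"
proof -
  have "(i,l) \<in> r\<^sup>*" using l by (simp add: desc_iff)
  then obtain m where m: "(i,m) \<in> r\<^sup>*" "(m,l) \<in> r" using l(2) by (cases rule: rtranclE) auto
  obtain k where k: "k \<in> {1..K}" "a \<in> desc (S k)" using cover a(1) by blast
  have s1: "desc a \<subseteq> desc (S k)" using desc_Ek k by blast
  have s2: "desc i \<subseteq> desc (S k)" using desc_Ek k a(2) desc_trans by blast
  have md: "m \<in> desc i" using m(1) by (simp add: desc_iff)
  have "tp (desc i) l = m" using tp_eq[OF k(1) s2 l(1) md m(2)] .
  moreover have "tp (desc a) l = m" using tp_eq[OF k(1) s1 _ _ m(2)] l(1) md a(2) desc_trans by blast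
  ultimately show ?thesis using md m(2) by simp
qed

lemma tp_child: assumes a: "a \<in> E" and j: "j \<in> ch a" shows "tp (desc a) j = a"
proof -
  obtain k where k: "k \<in> {1..K}" "a \<in> desc (S k)" using cover a by blast
  show ?thesis using tp_eq[OF k(1) desc_Ek[OF k] ch_desc[OF a j] desc_self] a j ch_r by blast
qed

lemma leaf_iff: "leaf i \<longleftrightarrow> ch i = {}" by (simp add: is_leaf_def)
lemma ldesc_def': "ldesc i = desc i \<inter> lvs" by (simp add: leaf_desc_def)
lemma ldesc_leaf: "i \<in> E \<Longrightarrow> leaf i \<Longrightarrow> ldesc i = {i}"
  using desc_unfold[of i] by (auto simp: ldesc_def' leaves_def leaf_iff)
lemma ldesc_nonleaf: "i \<in> E \<Longrightarrow> \<not> leaf i \<Longrightarrow> ldesc i = (\<Union>j\<in>ch i. ldesc j)"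
  using desc_unfold[of i] by (auto simp: ldesc_def' leaves_def)
lemma ldesc_mono: "j \<in> desc i \<Longrightarrow> ldesc j \<subseteq> ldesc i"
  using desc_trans by (auto simp: ldesc_def')

end



context mnet begin

definition GF :: "('l \<Rightarrow> real) \<Rightarrow> 'l \<Rightarrow> real" where
  "GF \<theta> = wfrec (r\<inverse>) (\<lambda>f i. if i \<in> E then (if leaf i then \<theta> i else \<theta> i + (1 - \<theta> i) * (\<Prod>j\<in>ch i. f j)) else undefined)"

lemma GF_eq: "GF \<theta> i = (if i \<in> E then (if leaf i then \<theta> i else \<theta> i + (1 - \<theta> i) * (\<Prod>j\<in>ch i. GF \<theta> j)) else undefined)"
proof -
  have "GF \<theta> i = (if i \<in> E then (if leaf i then \<theta> i else \<theta> i + (1 - \<theta> i) * (\<Prod>j\<in>ch i. cut (GF \<theta>) (r\<inverse>) i j)) else undefined)"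
    unfolding GF_def by (subst wfrec[OF wf_r]) simp
  also have "\<dots> = (if i \<in> E then (if leaf i then \<theta> i else \<theta> i + (1 - \<theta> i) * (\<Prod>j\<in>ch i. GF \<theta> j)) else undefined)"
    by (auto intro!: prod.cong cut_apply simp: ch_r)
  finally show ?thesis .
qed

lemma Gamma_GF: "Gamma hed tal E \<theta> = GF \<theta>"
  unfolding Gamma_def
proof (rule the_equality)
  show "GF \<theta> \<in> extensional E \<and> (\<forall>i\<in>E. GF \<theta> i = (if leaf i then \<theta> i else \<theta> i + (1 - \<theta> i) * (\<Prod>j\<in>ch i. GF \<theta> j)))"
    by (auto simp: extensional_def GF_eq[of \<theta>])
  fix g assume g: "g \<in> extensional E \<and> (\<forall>i\<in>E. g i = (if leaf i then \<theta> i else \<theta> i + (1 - \<theta> i) * (\<Prod>j\<in>ch i. g j)))"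
  show "g = GF \<theta>"
  proof
    fix i show "g i = GF \<theta> i"
    proof (cases "i \<in> E")
      case True
      then show ?thesis
      proof (induction rule: E_induct)
        case (step i)
        then show ?case using g by (subst GF_eq) (auto intro!: prod.cong)
      qed
    next
      case False
      then show ?thesis using g by (simp add: GF_eq extensional_def)
    qed
  qed
qed

lemma Gamma_eq: "i \<in> E \<Longrightarrow> Gamma hed tal E \<theta> i = (if leaf i then \<theta> i else \<theta> i + (1 - \<theta> i) * (\<Prod>j\<in>ch i. Gamma hed tal E \<theta> j))"
  unfolding Gamma_GF by (subst GF_eq) simp

lemma Gamma_ext: "Gamma hed tal E \<theta> \<in> extensional E"
  unfolding Gamma_GF by (auto simp: extensional_def GF_eq[of \<theta>])

lemma Theta_bd: "\<theta> \<in> Theta_space E \<Longrightarrow> i \<in> E \<Longrightarrow> 0 < \<theta> i \<and> \<theta> i < 1"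
  unfolding Theta_space_def by auto

abbreviation "PP \<xi> i \<equiv> (\<Prod>j\<in>ch i. \<xi> j)"

lemma Gamma_bd: assumes th: "\<theta> \<in> Theta_space E" and i: "i \<in> E"
  shows "0 < Gamma hed tal E \<theta> i \<and> Gamma hed tal E \<theta> i < 1"
  using i
proof (induction rule: E_induct)
  case (step i)
  let ?g = "Gamma hed tal E \<theta>"
  have t: "0 < \<theta> i" "\<theta> i < 1" using Theta_bd[OF th step(1)] by auto
  show ?case
  proof (cases "leaf i")
    case True then show ?thesis using t Gamma_eq[OF step(1)] by simp
  next
    case False
    then have "ch i \<noteq> {}" by (simp add: leaf_iff)
    then have p: "0 < PP ?g i" "PP ?g i < 1" using prod_pos_lt1[OF ch_fin, of i ?g] step(2) by auto
    have lt0: "(1 - \<theta> i) * PP ?g i < (1 - \<theta> i) * 1" using p t by (intro mult_strict_left_mono) auto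
    then have lt: "(1 - \<theta> i) * PP ?g i < 1 - \<theta> i" by simp
    have ps: "0 < (1 - \<theta> i) * PP ?g i" using p t by simp
    have e: "?g i = \<theta> i + (1 - \<theta> i) * PP ?g i" using Gamma_eq[OF step(1)] False by simp
    show ?thesis using lt ps e t by linarith
  qed
qed

lemma PP_bd: assumes th: "\<theta> \<in> Theta_space E" and i: "i \<in> E" "\<not> leaf i"
  shows "0 < PP (Gamma hed tal E \<theta>) i \<and> PP (Gamma hed tal E \<theta>) i < 1"
proof -
  have "ch i \<noteq> {}" using i by (simp add: leaf_iff)
  then show ?thesis using prod_pos_lt1[OF ch_fin] Gamma_bd[OF th] ch_sub by blast
qed

lemma PP_pos: assumes th: "\<theta> \<in> Theta_space E" shows "0 < PP (Gamma hed tal E \<theta>) i"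
  using Gamma_bd[OF th] ch_sub by (intro prod_pos) blast

lemma theta_of_Gamma: assumes th: "\<theta> \<in> Theta_space E" and i: "i \<in> E"
  shows "theta_of hed tal E (Gamma hed tal E \<theta>) i = \<theta> i"
proof (cases "leaf i")
  case True then show ?thesis using Gamma_eq[OF i] by (simp add: theta_of_def)
next
  case False
  have p: "PP (Gamma hed tal E \<theta>) i < 1" using PP_bd[OF th i False] by simp
  show ?thesis using Gamma_eq[OF i] False p by (simp add: theta_of_def field_simps)
qed

lemma Lambda_Gamma: assumes th: "\<theta> \<in> Theta_space E" and i: "i \<in> E"
  shows "Lambda hed tal E (Gamma hed tal E \<theta>) i =
     ln (1 - \<theta> i) + ln (PP (Gamma hed tal E \<theta>) i) - ln (Gamma hed tal E \<theta> i)"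
proof -
  let ?g = "Gamma hed tal E \<theta>"
  have t: "0 < \<theta> i" "\<theta> i < 1" using Theta_bd[OF th i] by auto
  have g: "0 < ?g i" using Gamma_bd[OF th i] by simp
  show ?thesis
  proof (cases "leaf i")
    case True
    then have "PP ?g i = 1" by (simp add: leaf_iff)
    then show ?thesis using True i t g theta_of_Gamma[OF th i] by (simp add: Lambda_def ln_div)
  next
    case False
    have p: "0 < PP ?g i" using PP_pos[OF th] by simp
    have "?g i - \<theta> i = (1 - \<theta> i) * PP ?g i" using Gamma_eq[OF i] False by simp
    then show ?thesis using False i t g p theta_of_Gamma[OF th i] by (simp add: Lambda_def ln_div ln_mult)
  qed
qed

lemma Lambda_Gamma_xi: assumes th: "\<theta> \<in> Theta_space E" and i: "i \<in> E"
  shows "Lambda hed tal E (Gamma hed tal E \<theta>) i =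
     ln ((if leaf i then 1 else PP (Gamma hed tal E \<theta>) i / (1 - PP (Gamma hed tal E \<theta>) i))
          * ((1 - Gamma hed tal E \<theta> i) / Gamma hed tal E \<theta> i))"
proof -
  let ?g = "Gamma hed tal E \<theta>"
  have t: "0 < \<theta> i" "\<theta> i < 1" using Theta_bd[OF th i] by auto
  have g: "0 < ?g i" using Gamma_bd[OF th i] by simp
  show ?thesis
  proof (cases "leaf i")
    case True
    then show ?thesis using True i t g theta_of_Gamma[OF th i] Gamma_eq[OF i] by (simp add: Lambda_def)
  next
    case False
    have p: "0 < PP ?g i" "PP ?g i < 1" using PP_bd[OF th i False] by auto
    have e: "?g i = \<theta> i + (1 - \<theta> i) * PP ?g i" using Gamma_eq[OF i] False by simp
    have a: "?g i - \<theta> i = (1 - \<theta> i) * PP ?g i" "1 - ?g i = (1 - \<theta> i) * (1 - PP ?g i)"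
      using e by (simp_all add: algebra_simps)
    have "(?g i - \<theta> i) / ?g i = PP ?g i / (1 - PP ?g i) * ((1 - ?g i) / ?g i)"
      using p g by (simp only: a) (simp add: field_simps)
    then show ?thesis using False i theta_of_Gamma[OF th i] by (simp add: Lambda_def)
  qed
qed

lemma Lambda_inj: "inj_on (Lambda hed tal E) (Xi_space hed tal E)"
proof (rule inj_onI)
  fix x y assume "x \<in> Xi_space hed tal E" "y \<in> Xi_space hed tal E" and eq: "Lambda hed tal E x = Lambda hed tal E y"
  then obtain \<theta> \<theta>' where th: "\<theta> \<in> Theta_space E" "\<theta>' \<in> Theta_space E"
    and x: "x = Gamma hed tal E \<theta>" and y: "y = Gamma hed tal E \<theta>'" by (auto simp: Xi_space_def)
  have "\<forall>i\<in>E. x i = y i"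
  proof
    fix i assume "i \<in> E" then show "x i = y i"
    proof (induction rule: E_induct)
      case (step i)
      have pe: "PP x i = PP y i" using step(2) by (auto intro!: prod.cong)
      have c: "0 < (if leaf i then 1 else PP x i / (1 - PP x i))"
        using PP_bd[OF th(1) step(1)] x by auto
      have x0: "0 < x i" "x i < 1" "0 < y i" "y i < 1" using Gamma_bd[OF th(1) step(1)] Gamma_bd[OF th(2) step(1)] x y by auto
      define cc where "cc = (if leaf i then 1 else PP x i / (1 - PP x i))"
      have H: "ln (cc * ((1 - x i) / x i)) = ln (cc * ((1 - y i) / y i))"
        using eq Lambda_Gamma_xi[OF th(1) step(1)] Lambda_Gamma_xi[OF th(2) step(1)] x y pe unfolding cc_def by metis
      have pa: "0 < cc * ((1 - x i) / x i)" "0 < cc * ((1 - y i) / y i)" using c x0 unfolding cc_def by auto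
      have "cc * ((1 - x i) / x i) = cc * ((1 - y i) / y i)" using H ln_inj_iff[OF pa] by blast
      then have "(1 - x i) / x i = (1 - y i) / y i" using c unfolding cc_def by (metis mult_cancel_left less_irrefl)
      then have "1 / x i = 1 / y i" using x0 by (simp add: diff_divide_distrib)
      then show ?case by simp
    qed
  qed
  then show "x = y" unfolding x y by (intro extensionalityI[OF Gamma_ext Gamma_ext]) (use x y in auto)
qed

end



definition base :: "('l \<Rightarrow> real) \<Rightarrow> 'l \<Rightarrow> bool \<Rightarrow> bool \<Rightarrow> real" where
  "base \<theta> l y x = (if y then (if x then 1 - \<theta> l else \<theta> l) else (if x then 0 else 1))"

context mnet begin

definition cw :: "('l \<Rightarrow> real) \<Rightarrow> ('l \<Rightarrow> bool \<Rightarrow> real) \<Rightarrow> 'l \<Rightarrow> bool \<Rightarrow> 'l set \<Rightarrow> real" where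
  "cw \<theta> ev a y V = (\<Prod>l\<in>desc a. base \<theta> l (if l = a then y else tp (desc a) l \<in> V) (l \<in> V) * ev l (l \<in> V))"

definition Msg :: "('l \<Rightarrow> real) \<Rightarrow> ('l \<Rightarrow> bool \<Rightarrow> real) \<Rightarrow> 'l \<Rightarrow> bool \<Rightarrow> real" where
  "Msg \<theta> ev a y = (\<Sum>V\<in>Pow (desc a). cw \<theta> ev a y V)"

lemma cw_split: assumes a: "a \<in> E" and V: "V \<subseteq> (\<Union>j\<in>ch a. desc j)"
  shows "cw \<theta> ev a y (if x then insert a V else V) = base \<theta> a y x * ev a x * (\<Prod>j\<in>ch a. cw \<theta> ev j x (V \<inter> desc j))"
proof -
  let ?D = "\<Union>j\<in>ch a. desc j"
  let ?V = "if x then insert a V else V"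
  let ?h = "\<lambda>l. base \<theta> l (if l = a then y else tp (desc a) l \<in> ?V) (l \<in> ?V) * ev l (l \<in> ?V)"
  have aD: "a \<notin> ?D" using not_in_desc_child[OF a] by blast
  have aV: "a \<in> ?V \<longleftrightarrow> x" using aD V by auto
  have "cw \<theta> ev a y ?V = ?h a * (\<Prod>j\<in>ch a. prod ?h (desc j))"
    unfolding cw_def by (rule prod_desc[OF a])
  also have "?h a = base \<theta> a y x * ev a x" using aV by simp
  also have "(\<Prod>j\<in>ch a. prod ?h (desc j)) = (\<Prod>j\<in>ch a. cw \<theta> ev j x (V \<inter> desc j))"
  proof (rule prod.cong[OF refl])
    fix j assume j: "j \<in> ch a"
    have jE: "j \<in> E" using j ch_sub by blast
    show "prod ?h (desc j) = cw \<theta> ev j x (V \<inter> desc j)"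
      unfolding cw_def
    proof (rule prod.cong[OF refl])
      fix l assume l: "l \<in> desc j"
      have la: "l \<noteq> a" using l not_in_desc_child[OF a j] by blast
      have lV: "l \<in> ?V \<longleftrightarrow> l \<in> V \<inter> desc j" using l la by auto
      have pV: "(if l = a then y else tp (desc a) l \<in> ?V) = (if l = j then x else tp (desc j) l \<in> V \<inter> desc j)"
      proof (cases "l = j")
        case True then show ?thesis using tp_child[OF a j] aV la by simp
      next
        case False
        have T: "tp (desc a) l = tp (desc j) l" "tp (desc j) l \<in> desc j"
          using tp_desc[OF jE l False a ch_desc[OF a j]] by auto
        then have "tp (desc j) l \<noteq> a" using not_in_desc_child[OF a j] by blast
        then show ?thesis using T la False by auto
      qed
      show "?h l = base \<theta> l (if l = j then x else tp (desc j) l \<in> V \<inter> desc j) (l \<in> V \<inter> desc j) * ev l (l \<in> V \<inter> desc j)"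
        using pV lV la by simp
    qed
  qed
  finally show ?thesis by simp
qed

lemma Msg_rec: assumes a: "a \<in> E"
  shows "Msg \<theta> ev a y = base \<theta> a y True * ev a True * (\<Prod>j\<in>ch a. Msg \<theta> ev j True)
                       + base \<theta> a y False * ev a False * (\<Prod>j\<in>ch a. Msg \<theta> ev j False)"
proof -
  let ?D = "\<Union>j\<in>ch a. desc j"
  have aD: "a \<notin> ?D" using not_in_desc_child[OF a] by blast
  have finD: "finite ?D" using ch_fin desc_fin ch_sub by blast
  have PS: "(\<Sum>V\<in>Pow ?D. \<Prod>j\<in>ch a. cw \<theta> ev j x (V \<inter> desc j)) = (\<Prod>j\<in>ch a. Msg \<theta> ev j x)" for x
    unfolding Msg_def using ch_fin desc_fin ch_sub desc_disj[OF a]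
    by (intro sum_pow_prod) blast+
  have "Msg \<theta> ev a y = (\<Sum>V\<in>Pow ?D. cw \<theta> ev a y V) + (\<Sum>V\<in>Pow ?D. cw \<theta> ev a y (insert a V))"
    unfolding Msg_def by (subst desc_unfold[OF a]) (rule sum_pow_insert[OF aD finD])
  also have "(\<Sum>V\<in>Pow ?D. cw \<theta> ev a y V) = (\<Sum>V\<in>Pow ?D. base \<theta> a y False * ev a False * (\<Prod>j\<in>ch a. cw \<theta> ev j False (V \<inter> desc j)))"
    using cw_split[OF a, of _ \<theta> ev y False] by (intro sum.cong) auto
  also have "(\<Sum>V\<in>Pow ?D. cw \<theta> ev a y (insert a V)) = (\<Sum>V\<in>Pow ?D. base \<theta> a y True * ev a True * (\<Prod>j\<in>ch a. cw \<theta> ev j True (V \<inter> desc j)))"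
    using cw_split[OF a, of _ \<theta> ev y True] by (intro sum.cong) auto
  finally show ?thesis by (simp add: sum_distrib_left[symmetric] PS)
qed

lemma Msg_cong: "(\<And>l x. l \<in> desc a \<Longrightarrow> ev l x = ev' l x) \<Longrightarrow> Msg \<theta> ev a y = Msg \<theta> ev' a y"
  unfolding Msg_def cw_def by (intro sum.cong prod.cong) auto

lemma tree_prob_Msg: assumes a: "a \<in> E"
  and P: "\<And>U. U \<subseteq> desc a \<Longrightarrow> P U \<longleftrightarrow> (\<forall>l\<in>desc a. evb l (l \<in> U))"
  shows "tree_prob hed tal E \<theta> (desc a) a P = Msg \<theta> (\<lambda>l x. of_bool (evb l x)) a True"
proof -
  have seteq: "{U. U \<subseteq> desc a \<and> P U} = {U \<in> Pow (desc a). P U}" by auto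
  have "tree_prob hed tal E \<theta> (desc a) a P = sum (config_prob hed tal E \<theta> (desc a) a) {U \<in> Pow (desc a). P U}"
    unfolding tree_prob_def seteq ..
  also have "\<dots> = (\<Sum>U\<in>Pow (desc a). if P U then config_prob hed tal E \<theta> (desc a) a U else 0)"
    by (rule sum.inter_filter) (use desc_fin[OF a] in simp)
  also have "\<dots> = Msg \<theta> (\<lambda>l x. of_bool (evb l x)) a True"
    unfolding Msg_def
  proof (rule sum.cong[OF refl])
    fix U assume U: "U \<in> Pow (desc a)"
    have "cw \<theta> (\<lambda>l x. of_bool (evb l x)) a True U = config_prob hed tal E \<theta> (desc a) a U * (\<Prod>l\<in>desc a. of_bool (evb l (l \<in> U)))"
      unfolding cw_def config_prob_def prod.distrib[symmetric] by (intro prod.cong) (auto simp: base_def)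
    also have "(\<Prod>l\<in>desc a. (of_bool (evb l (l \<in> U)) :: real)) = of_bool (P U)"
      using prod_of_bool_real[OF desc_fin[OF a]] P U by simp
    finally show "(if P U then config_prob hed tal E \<theta> (desc a) a U else 0) = cw \<theta> (\<lambda>l x. of_bool (evb l x)) a True U"
      by simp
  qed
  finally show ?thesis .
qed

definition evO :: "'l set \<Rightarrow> 'l \<Rightarrow> bool \<Rightarrow> real" where
  "evO Ob l x = of_bool (l \<in> lvs \<longrightarrow> (x \<longleftrightarrow> l \<in> Ob))"

lemma Msg_F: assumes "a \<in> E" shows "Msg \<theta> (evO Ob) a False = of_bool (ldesc a \<inter> Ob = {})"
  using assms
proof (induction rule: E_induct)
  case (step a)
  show ?case
  proof (cases "leaf a")
    case True
    then have "ch a = {}" by (simp add: leaf_iff)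
    moreover have "a \<in> lvs" using True step(1) by (simp add: leaves_def)
    ultimately show ?thesis using Msg_rec[OF step(1)] ldesc_leaf[OF step(1) True] by (simp add: base_def evO_def)
  next
    case False
    then have "a \<notin> lvs" by (simp add: leaves_def)
    then have "Msg \<theta> (evO Ob) a False = (\<Prod>j\<in>ch a. Msg \<theta> (evO Ob) j False)"
      using Msg_rec[OF step(1)] by (simp add: base_def evO_def)
    also have "\<dots> = (\<Prod>j\<in>ch a. of_bool (ldesc j \<inter> Ob = {}))"
      using step(2) by (intro prod.cong) auto
    also have "\<dots> = of_bool (ldesc a \<inter> Ob = {})"
      using prod_of_bool_real[OF ch_fin] ldesc_nonleaf[OF step(1) False] by auto
    finally show ?thesis .
  qed
qed

lemma Msg_T: assumes th: "\<theta> \<in> Theta_space E" and "a \<in> E"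
  shows "Msg \<theta> (evO Ob) a True = (if ldesc a \<inter> Ob \<noteq> {} then (1 - \<theta> a) * (\<Prod>j\<in>ch a. Msg \<theta> (evO Ob) j True)
                                   else Gamma hed tal E \<theta> a)
       \<and> 0 < Msg \<theta> (evO Ob) a True"
  using assms(2)
proof (induction rule: E_induct)
  case (step a)
  have t: "0 < \<theta> a" "\<theta> a < 1" using Theta_bd[OF th step(1)] by auto
  have g: "0 < Gamma hed tal E \<theta> a" using Gamma_bd[OF th step(1)] by auto
  have eq: "Msg \<theta> (evO Ob) a True = (if ldesc a \<inter> Ob \<noteq> {} then (1 - \<theta> a) * (\<Prod>j\<in>ch a. Msg \<theta> (evO Ob) j True)
                                   else Gamma hed tal E \<theta> a)"
  proof (cases "leaf a")
    case True
    then have "ch a = {}" by (simp add: leaf_iff)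
    moreover have "a \<in> lvs" using True step(1) by (simp add: leaves_def)
    ultimately show ?thesis using Msg_rec[OF step(1)] ldesc_leaf[OF step(1) True] Gamma_eq[OF step(1)] True
      by (simp add: base_def evO_def)
  next
    case False
    then have nl: "a \<notin> lvs" by (simp add: leaves_def)
    have "(\<Prod>j\<in>ch a. Msg \<theta> (evO Ob) j False) = (\<Prod>j\<in>ch a. of_bool (ldesc j \<inter> Ob = {}))"
      by (intro prod.cong refl Msg_F) (use ch_sub in blast)
    also have "\<dots> = of_bool (ldesc a \<inter> Ob = {})"
      using prod_of_bool_real[OF ch_fin] ldesc_nonleaf[OF step(1) False] by auto
    finally have F: "(\<Prod>j\<in>ch a. Msg \<theta> (evO Ob) j False) = of_bool (ldesc a \<inter> Ob = {})" .
    have R: "Msg \<theta> (evO Ob) a True = (1 - \<theta> a) * (\<Prod>j\<in>ch a. Msg \<theta> (evO Ob) j True) + \<theta> a * of_bool (ldesc a \<inter> Ob = {})"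
      using Msg_rec[OF step(1)] nl F by (simp add: base_def evO_def)
    show ?thesis
    proof (cases "ldesc a \<inter> Ob = {}")
      case True
      have "(\<Prod>j\<in>ch a. Msg \<theta> (evO Ob) j True) = (\<Prod>j\<in>ch a. Gamma hed tal E \<theta> j)"
      proof (rule prod.cong[OF refl])
        fix j assume j: "j \<in> ch a"
        have "ldesc j \<inter> Ob = {}" using True j ldesc_nonleaf[OF step(1) False] by auto
        then show "Msg \<theta> (evO Ob) j True = Gamma hed tal E \<theta> j" using step(2)[OF j] by simp
      qed
      then show ?thesis using R True Gamma_eq[OF step(1)] False by simp
    next
      case False
      then show ?thesis using R by simp
    qed
  qed
  moreover have "0 < Msg \<theta> (evO Ob) a True"
  proof -
    have "0 < (\<Prod>j\<in>ch a. Msg \<theta> (evO Ob) j True)" using step(2) by (intro prod_pos) blast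
    then show ?thesis using eq t g by simp
  qed
  ultimately show ?case by blast
qed

end



context mnet begin

abbreviation "Yb Ob l \<equiv> ldesc l \<inter> Ob \<noteq> {}"

lemma Yb_mono: "l \<in> desc a \<Longrightarrow> Yb Ob l \<Longrightarrow> Yb Ob a"
  using ldesc_mono by blast

lemma ln_Msg_split: assumes th: "\<theta> \<in> Theta_space E" and a: "a \<in> E" and Y: "Yb Ob a"
  shows "ln (Msg \<theta> (evO Ob) a True) = ln (1 - \<theta> a) + (\<Sum>j\<in>ch a. ln (Msg \<theta> (evO Ob) j True))"
proof -
  have pos: "\<And>j. j \<in> ch a \<Longrightarrow> 0 < Msg \<theta> (evO Ob) j True" using Msg_T[OF th] ch_sub by blast
  have t: "0 < 1 - \<theta> a" using Theta_bd[OF th a] by simp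
  have "ln (Msg \<theta> (evO Ob) a True) = ln ((1 - \<theta> a) * (\<Prod>j\<in>ch a. Msg \<theta> (evO Ob) j True))"
    using Msg_T[OF th a] Y by simp
  also have "\<dots> = ln (1 - \<theta> a) + ln (\<Prod>j\<in>ch a. Msg \<theta> (evO Ob) j True)"
    using t pos by (intro ln_mult_pos) (auto intro!: prod_pos)
  also have "ln (\<Prod>j\<in>ch a. Msg \<theta> (evO Ob) j True) = (\<Sum>j\<in>ch a. ln (Msg \<theta> (evO Ob) j True))"
    using pos by (intro ln_prod ch_fin) (metis less_irrefl)
  finally show ?thesis .
qed

lemma ln_Msg1: assumes th: "\<theta> \<in> Theta_space E" and a: "a \<in> E"
  shows "ln (Msg \<theta> (evO Ob) a True) = (\<Sum>l\<in>desc a.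
      (if Yb Ob l then ln (1 - \<theta> l) else 0)
    + (if \<not> Yb Ob l \<and> (l = a \<or> Yb Ob (tp (desc a) l)) then ln (Gamma hed tal E \<theta> l) else 0))"
  using a
proof (induction rule: E_induct)
  case (step a)
  let ?f = "\<lambda>a l. (if Yb Ob l then ln (1 - \<theta> l) else 0)
    + (if \<not> Yb Ob l \<and> (l = a \<or> Yb Ob (tp (desc a) l)) then ln (Gamma hed tal E \<theta> l) else 0)"
  show ?case
  proof (cases "Yb Ob a")
    case False
    have "\<forall>l\<in>desc a. ?f a l = (if l = a then ln (Gamma hed tal E \<theta> a) else 0)"
    proof
      fix l assume l: "l \<in> desc a"
      have "\<not> Yb Ob l" using Yb_mono[OF l] False by blast
      moreover have "l \<noteq> a \<Longrightarrow> \<not> Yb Ob (tp (desc a) l)"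
        using tp_desc[OF step(1) l _ step(1) desc_self] Yb_mono False by blast
      ultimately show "?f a l = (if l = a then ln (Gamma hed tal E \<theta> a) else 0)" by auto
    qed
    then have "(\<Sum>l\<in>desc a. ?f a l) = (\<Sum>l\<in>desc a. if l = a then ln (Gamma hed tal E \<theta> a) else 0)"
      by (intro sum.cong refl) blast
    also have "\<dots> = ln (Gamma hed tal E \<theta> a)" using desc_fin[OF step(1)] desc_self by simp
    finally show ?thesis using Msg_T[OF th step(1)] False by simp
  next
    case True
    have "(\<Sum>l\<in>desc a. ?f a l) = ?f a a + (\<Sum>j\<in>ch a. \<Sum>l\<in>desc j. ?f a l)" by (rule sum_desc[OF step(1)])
    also have "?f a a = ln (1 - \<theta> a)" using True by simp
    also have "(\<Sum>j\<in>ch a. \<Sum>l\<in>desc j. ?f a l) = (\<Sum>j\<in>ch a. ln (Msg \<theta> (evO Ob) j True))"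
    proof (rule sum.cong[OF refl])
      fix j assume j: "j \<in> ch a"
      have jE: "j \<in> E" using j ch_sub by blast
      have "(\<Sum>l\<in>desc j. ?f a l) = (\<Sum>l\<in>desc j. ?f j l)"
      proof (rule sum.cong[OF refl])
        fix l assume l: "l \<in> desc j"
        have la: "l \<noteq> a" using l not_in_desc_child[OF step(1) j] by blast
        show "?f a l = ?f j l"
        proof (cases "l = j")
          case True then show ?thesis using tp_child[OF step(1) j] \<open>Yb Ob a\<close> la by simp
        next
          case False
          then have "tp (desc a) l = tp (desc j) l" using tp_desc[OF jE l False step(1) ch_desc[OF step(1) j]] by blast
          then show ?thesis using la False by simp
        qed
      qed
      then show "(\<Sum>l\<in>desc j. ?f a l) = ln (Msg \<theta> (evO Ob) j True)" using step(2)[OF j] by simp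
    qed
    finally show ?thesis using ln_Msg_split[OF th step(1) True] by simp
  qed
qed

abbreviation "psi \<theta> l \<equiv> ln (1 - \<theta> l) + ln (PP (Gamma hed tal E \<theta>) l) - ln (Gamma hed tal E \<theta> l)"

lemma ln_Msg2: assumes th: "\<theta> \<in> Theta_space E" and a: "a \<in> E"
  shows "ln (Msg \<theta> (evO Ob) a True) = ln (Gamma hed tal E \<theta> a) + (\<Sum>l\<in>desc a. if Yb Ob l then psi \<theta> l else 0)"
  using a
proof (induction rule: E_induct)
  case (step a)
  show ?case
  proof (cases "Yb Ob a")
    case False
    have "(\<Sum>l\<in>desc a. if Yb Ob l then psi \<theta> l else 0) = 0"
      using Yb_mono[of _ a Ob] False by (intro sum.neutral) auto
    then show ?thesis using Msg_T[OF th step(1)] False by simp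
  next
    case True
    have g: "\<And>j. j \<in> ch a \<Longrightarrow> 0 < Gamma hed tal E \<theta> j" using Gamma_bd[OF th] ch_sub by blast
    have lp: "ln (PP (Gamma hed tal E \<theta>) a) = (\<Sum>j\<in>ch a. ln (Gamma hed tal E \<theta> j))"
      using g by (intro ln_prod ch_fin) (metis less_irrefl)
    have "(\<Sum>l\<in>desc a. if Yb Ob l then psi \<theta> l else 0) = (if Yb Ob a then psi \<theta> a else 0) + (\<Sum>j\<in>ch a. \<Sum>l\<in>desc j. if Yb Ob l then psi \<theta> l else 0)"
      by (rule sum_desc[OF step(1)])
    moreover have "ln (Msg \<theta> (evO Ob) a True) = ln (1 - \<theta> a) + (\<Sum>j\<in>ch a. ln (Gamma hed tal E \<theta> j))
        + (\<Sum>j\<in>ch a. \<Sum>l\<in>desc j. if Yb Ob l then psi \<theta> l else 0)"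
      using ln_Msg_split[OF th step(1) True] step(2) by (simp add: sum.distrib)
    ultimately show ?thesis using lp True by simp
  qed
qed

lemma cond_prob: assumes th: "\<theta> \<in> Theta_space E" and i: "i \<in> E" and nl: "\<not> leaf i"
  shows "cond_prob_pass hed tal E \<theta> i = (1 - \<theta> i) * PP (Gamma hed tal E \<theta>) i / Gamma hed tal E \<theta> i"
proof -
  have il: "i \<notin> lvs" using nl by (simp add: leaves_def)
  have ld: "ldesc i = desc i \<inter> lvs" by (simp add: ldesc_def')
  have den: "tree_prob hed tal E \<theta> (desc i) i (\<lambda>U. U \<inter> ldesc i = {}) = Msg \<theta> (evO {}) i True"
    unfolding evO_def by (rule tree_prob_Msg[OF i]) (auto simp: ld)
  have den2: "Msg \<theta> (evO {}) i True = Gamma hed tal E \<theta> i" using Msg_T[OF th i] by simp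
  let ?ev = "\<lambda>l x. (l = i \<longrightarrow> x) \<and> (l \<in> lvs \<longrightarrow> \<not> x)"
  have num: "tree_prob hed tal E \<theta> (desc i) i (\<lambda>U. i \<in> U \<and> U \<inter> ldesc i = {}) = Msg \<theta> (\<lambda>l x. of_bool (?ev l x)) i True"
    by (rule tree_prob_Msg[OF i]) (auto simp: ld desc_self)
  have "Msg \<theta> (\<lambda>l x. of_bool (?ev l x)) i True = (1 - \<theta> i) * (\<Prod>j\<in>ch i. Msg \<theta> (\<lambda>l x. of_bool (?ev l x)) j True)"
    using Msg_rec[OF i] il by (simp add: base_def)
  also have "(\<Prod>j\<in>ch i. Msg \<theta> (\<lambda>l x. of_bool (?ev l x)) j True) = PP (Gamma hed tal E \<theta>) i"
  proof (rule prod.cong[OF refl])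
    fix j assume j: "j \<in> ch i"
    have jE: "j \<in> E" using j ch_sub by blast
    have "Msg \<theta> (\<lambda>l x. of_bool (?ev l x)) j True = Msg \<theta> (evO {}) j True"
      using not_in_desc_child[OF i j] by (intro Msg_cong) (auto simp: evO_def)
    also have "\<dots> = Gamma hed tal E \<theta> j" using Msg_T[OF th jE] by simp
    finally show "Msg \<theta> (\<lambda>l x. of_bool (?ev l x)) j True = Gamma hed tal E \<theta> j" .
  qed
  finally show ?thesis unfolding cond_prob_pass_def using num den den2 by simp
qed

end



lemma sum_if_card: "finite T \<Longrightarrow> (\<Sum>t\<in>T. if P t then c else 0) = real (card {t\<in>T. P t}) * (c::real)"
  by (simp add: sum.inter_filter[symmetric])

context mnet begin

lemma Ek_sub: "k \<in> {1..K} \<Longrightarrow> desc (S k) \<subseteq> E" using desc_sub S_in by blast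

lemma tree_prob_obs: assumes k: "k \<in> {1..K}"
  shows "tree_prob hed tal E \<theta> (desc (S k)) (S k) (\<lambda>U. U \<inter> lvs = Ob \<inter> lvs \<inter> desc (S k))
       = Msg \<theta> (evO Ob) (S k) True"
  unfolding evO_def by (rule tree_prob_Msg[OF S_in[OF k]]) auto

lemma loglik_Msg: "loglik hed tal E K S n obs \<theta> = (\<Sum>k\<in>{1..K}. \<Sum>t\<in>{1..n k}. ln (Msg \<theta> (evO (obs k t)) (S k) True))"
  unfolding loglik_def using tree_prob_obs by simp

lemma cnt1_eq: "k \<in> {1..K} \<Longrightarrow> l \<in> desc (S k) \<Longrightarrow>
   cnt1 hed tal E K S n obs k l = real (card {t\<in>{1..n k}. Yb (obs k t) l})"
  by (simp add: cnt1_def)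

lemma cnt1_out: "k \<in> {1..K} \<Longrightarrow> l \<notin> desc (S k) \<Longrightarrow> cnt1 hed tal E K S n obs k l = 0"
  by (simp add: cnt1_def)

lemma cnt0_out: "k \<in> {1..K} \<Longrightarrow> l \<notin> desc (S k) \<Longrightarrow> cnt0 hed tal E K S n obs k l = 0"
  using desc_self[of "S k"] by (auto simp: cnt0_def)

lemma card_sum: "finite T \<Longrightarrow> real (card {t\<in>T. P t}) = (\<Sum>t\<in>T. if P t then 1 else 0)"
  using sum_if_card[of T P 1] by simp

lemma cnt0_eq: assumes k: "k \<in> {1..K}" and l: "l \<in> desc (S k)"
  shows "cnt0 hed tal E K S n obs k l = real (card {t\<in>{1..n k}. \<not> Yb (obs k t) l \<and> (l = S k \<or> Yb (obs k t) (tp (desc (S k)) l))})"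
proof (cases "l = S k")
  case True
  have "cnt0 hed tal E K S n obs k l = real (n k) - real (card {t\<in>{1..n k}. Yb (obs k t) l})"
    using True k cnt1_eq[OF k l] by (simp add: cnt0_def)
  also have "\<dots> = real (n k) - (\<Sum>t\<in>{1..n k}. if Yb (obs k t) l then 1 else 0)"
    by (simp only: card_sum[OF finite_atLeastAtMost])
  also have "\<dots> = (\<Sum>t\<in>{1..n k}. (1::real) - (if Yb (obs k t) l then 1 else 0))"
    by (simp add: sum_subtractf)
  also have "\<dots> = (\<Sum>t\<in>{1..n k}. if \<not> Yb (obs k t) l then 1 else 0)"
    by (intro sum.cong refl) auto
  also have "\<dots> = real (card {t\<in>{1..n k}. \<not> Yb (obs k t) l \<and> (l = S k \<or> Yb (obs k t) (tp (desc (S k)) l))})"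
    using True by (simp only: card_sum[OF finite_atLeastAtMost]) simp
  finally show ?thesis .
next
  case False
  have SE: "S k \<in> E" using S_in[OF k] .
  have T: "tp (desc (S k)) l \<in> desc (S k)" "(tp (desc (S k)) l, l) \<in> r"
    using tp_desc[OF SE l False SE desc_self] by auto
  let ?p = "tp (desc (S k)) l"
  have mono: "Yb Ob l \<Longrightarrow> Yb Ob ?p" for Ob using Yb_mono[of l ?p Ob] T(2) by (auto simp: desc_iff)
  have "cnt0 hed tal E K S n obs k l = cnt1 hed tal E K S n obs k ?p - cnt1 hed tal E K S n obs k l"
    using False k l by (simp add: cnt0_def)
  also have "\<dots> = (\<Sum>t\<in>{1..n k}. if Yb (obs k t) ?p then 1 else 0) - (\<Sum>t\<in>{1..n k}. if Yb (obs k t) l then 1 else 0)"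
    using cnt1_eq[OF k l] cnt1_eq[OF k T(1)] by (simp only: card_sum[OF finite_atLeastAtMost])
  also have "\<dots> = (\<Sum>t\<in>{1..n k}. if \<not> Yb (obs k t) l \<and> (l = S k \<or> Yb (obs k t) ?p) then 1 else 0)"
    unfolding sum_subtractf[symmetric] using mono False by (intro sum.cong refl) auto
  also have "\<dots> = real (card {t\<in>{1..n k}. \<not> Yb (obs k t) l \<and> (l = S k \<or> Yb (obs k t) ?p)})"
    by (simp only: card_sum[OF finite_atLeastAtMost])
  finally show ?thesis .
qed

lemma sum_E_to_Ek: assumes k: "k \<in> {1..K}" and z: "\<And>l. l \<in> E \<Longrightarrow> l \<notin> desc (S k) \<Longrightarrow> f l = 0"
  shows "(\<Sum>l\<in>E. f l) = (\<Sum>l\<in>desc (S k). f l)"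
  using Ek_sub[OF k] finE z by (intro sum.mono_neutral_right) auto

lemma main2: assumes th: "\<theta> \<in> Theta_space E"
  shows "loglik hed tal E K S n obs \<theta> = (\<Sum>k\<in>{1..K}. real (n k) * ln (Gamma hed tal E \<theta> (S k)))
      + (\<Sum>l\<in>E. N1 hed tal E K S n obs l * Lambda hed tal E (Gamma hed tal E \<theta>) l)"
proof -
  have "loglik hed tal E K S n obs \<theta> = (\<Sum>k\<in>{1..K}. \<Sum>t\<in>{1..n k}. ln (Gamma hed tal E \<theta> (S k))
         + (\<Sum>l\<in>desc (S k). if Yb (obs k t) l then psi \<theta> l else 0))"
    unfolding loglik_Msg using ln_Msg2[OF th S_in] by simp
  also have "\<dots> = (\<Sum>k\<in>{1..K}. real (n k) * ln (Gamma hed tal E \<theta> (S k))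
         + (\<Sum>l\<in>desc (S k). cnt1 hed tal E K S n obs k l * psi \<theta> l))"
  proof (rule sum.cong[OF refl])
    fix k assume k: "k \<in> {1..K}"
    have "(\<Sum>t\<in>{1..n k}. \<Sum>l\<in>desc (S k). if Yb (obs k t) l then psi \<theta> l else 0)
        = (\<Sum>l\<in>desc (S k). \<Sum>t\<in>{1..n k}. if Yb (obs k t) l then psi \<theta> l else 0)"
      by (rule sum.swap)
    also have "\<dots> = (\<Sum>l\<in>desc (S k). cnt1 hed tal E K S n obs k l * psi \<theta> l)"
      using cnt1_eq[OF k] by (intro sum.cong refl) (simp add: sum_if_card)
    finally show "(\<Sum>t\<in>{1..n k}. ln (Gamma hed tal E \<theta> (S k)) + (\<Sum>l\<in>desc (S k). if Yb (obs k t) l then psi \<theta> l else 0))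
        = real (n k) * ln (Gamma hed tal E \<theta> (S k)) + (\<Sum>l\<in>desc (S k). cnt1 hed tal E K S n obs k l * psi \<theta> l)"
      by (simp add: sum.distrib)
  qed
  also have "\<dots> = (\<Sum>k\<in>{1..K}. real (n k) * ln (Gamma hed tal E \<theta> (S k)))
      + (\<Sum>k\<in>{1..K}. \<Sum>l\<in>E. cnt1 hed tal E K S n obs k l * psi \<theta> l)"
    by (simp add: sum.distrib sum_E_to_Ek cnt1_out)
  also have "(\<Sum>k\<in>{1..K}. \<Sum>l\<in>E. cnt1 hed tal E K S n obs k l * psi \<theta> l)
      = (\<Sum>l\<in>E. N1 hed tal E K S n obs l * Lambda hed tal E (Gamma hed tal E \<theta>) l)"
    unfolding N1_def sum_distrib_right using Lambda_Gamma[OF th] by (subst sum.swap) (intro sum.cong refl, simp)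
  finally show ?thesis .
qed

lemma c1_eq: assumes th: "\<theta> \<in> Theta_space E" and l: "l \<in> E"
  shows "ln ((1 - Gamma hed tal E \<theta> l) / (1 - (if ch l = {} then 0 else PP (Gamma hed tal E \<theta>) l))) = ln (1 - \<theta> l)"
proof (cases "leaf l")
  case True then show ?thesis using Gamma_eq[OF l] by (simp add: leaf_iff)
next
  case False
  have p: "PP (Gamma hed tal E \<theta>) l < 1" using PP_bd[OF th l False] by simp
  have "1 - Gamma hed tal E \<theta> l = (1 - \<theta> l) * (1 - PP (Gamma hed tal E \<theta>) l)"
    using Gamma_eq[OF l] False by (simp add: algebra_simps)
  then show ?thesis using False p by (simp add: leaf_iff)
qed

lemma main3: assumes th: "\<theta> \<in> Theta_space E"
  shows "loglik hed tal E K S n obs \<theta> = (\<Sum>l\<in>E. N1 hed tal E K S n obs l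
                   * ln ((1 - Gamma hed tal E \<theta> l) / (1 - (if ch l = {} then 0 else PP (Gamma hed tal E \<theta>) l)))
                 + N0 hed tal E K S n obs l * ln (Gamma hed tal E \<theta> l))"
proof -
  let ?c1 = "\<lambda>l. ln (1 - \<theta> l)" and ?c0 = "\<lambda>l. ln (Gamma hed tal E \<theta> l)"
  have "loglik hed tal E K S n obs \<theta> = (\<Sum>k\<in>{1..K}. \<Sum>t\<in>{1..n k}. \<Sum>l\<in>desc (S k).
      (if Yb (obs k t) l then ?c1 l else 0)
    + (if \<not> Yb (obs k t) l \<and> (l = S k \<or> Yb (obs k t) (tp (desc (S k)) l)) then ?c0 l else 0))"
    unfolding loglik_Msg using ln_Msg1[OF th S_in] by simp
  also have "\<dots> = (\<Sum>k\<in>{1..K}. \<Sum>l\<in>desc (S k). cnt1 hed tal E K S n obs k l * ?c1 l + cnt0 hed tal E K S n obs k l * ?c0 l)"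
  proof (rule sum.cong[OF refl])
    fix k assume k: "k \<in> {1..K}"
    show "(\<Sum>t\<in>{1..n k}. \<Sum>l\<in>desc (S k).
      (if Yb (obs k t) l then ?c1 l else 0)
    + (if \<not> Yb (obs k t) l \<and> (l = S k \<or> Yb (obs k t) (tp (desc (S k)) l)) then ?c0 l else 0))
      = (\<Sum>l\<in>desc (S k). cnt1 hed tal E K S n obs k l * ?c1 l + cnt0 hed tal E K S n obs k l * ?c0 l)"
      apply (subst sum.swap)
      apply (rule sum.cong[OF refl])
      apply (simp only: sum.distrib sum_if_card[OF finite_atLeastAtMost] cnt1_eq[OF k] cnt0_eq[OF k])
      done
  qed
  also have "\<dots> = (\<Sum>k\<in>{1..K}. \<Sum>l\<in>E. cnt1 hed tal E K S n obs k l * ?c1 l + cnt0 hed tal E K S n obs k l * ?c0 l)"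
    by (intro sum.cong refl sum_E_to_Ek[symmetric]) (simp_all add: cnt1_out cnt0_out)
  also have "\<dots> = (\<Sum>l\<in>E. N1 hed tal E K S n obs l * ?c1 l + N0 hed tal E K S n obs l * ?c0 l)"
    unfolding N1_def N0_def sum_distrib_right sum.distrib[symmetric] by (rule sum.swap)
  also have "\<dots> = (\<Sum>l\<in>E. N1 hed tal E K S n obs l
                   * ln ((1 - Gamma hed tal E \<theta> l) / (1 - (if ch l = {} then 0 else PP (Gamma hed tal E \<theta>) l)))
                 + N0 hed tal E K S n obs l * ln (Gamma hed tal E \<theta> l))"
    using c1_eq[OF th] by (intro sum.cong refl) simp
  finally show ?thesis .
qed

lemma main4: assumes th: "\<theta> \<in> Theta_space E" and i: "i \<in> E" and nl: "\<not> leaf i"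
  shows "Lambda hed tal E (Gamma hed tal E \<theta>) i = ln (cond_prob_pass hed tal E \<theta> i)"
proof -
  have t: "0 < 1 - \<theta> i" using Theta_bd[OF th i] by simp
  have p: "0 < PP (Gamma hed tal E \<theta>) i" using PP_pos[OF th] by simp
  have g: "0 < Gamma hed tal E \<theta> i" using Gamma_bd[OF th i] by simp
  show ?thesis using Lambda_Gamma[OF th i] cond_prob[OF th i nl] t p g by (simp add: ln_div ln_mult_pos)
qed

end

theorem mainTheorem3:
  fixes hed tal :: "'l \<Rightarrow> 'v" and E :: "'l set" and K :: nat and S :: "nat \<Rightarrow> 'l"
    and n :: "nat \<Rightarrow> nat" and obs :: "nat \<Rightarrow> nat \<Rightarrow> 'l set"
  assumes net: "multicast_network hed tal E K S"
  shows "bij_betw (Lambda hed tal E) (Xi_space hed tal E) (Lambda hed tal E ` Xi_space hed tal E)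
    \<and> (\<forall>\<theta> \<in> Theta_space E.
         let \<psi> = Lambda hed tal E (Gamma hed tal E \<theta>);
             \<xi>\<psi> = inv_into (Xi_space hed tal E) (Lambda hed tal E) \<psi>
         in loglik hed tal E K S n obs \<theta>
            = (\<Sum>k \<in> {1..K}. real (n k) * ln (\<xi>\<psi> (S k)))
              + (\<Sum>i \<in> E. N1 hed tal E K S n obs i * \<psi> i))
    \<and> (\<forall>\<theta> \<in> Theta_space E.
         let \<xi> = Gamma hed tal E \<theta>
         in loglik hed tal E K S n obs \<theta>
            = (\<Sum>i \<in> E. N1 hed tal E K S n obs i
                   * ln ((1 - \<xi> i) / (1 - (if children hed tal E i = {} then 0
                                            else (\<Prod>j \<in> children hed tal E i. \<xi> j))))
                 + N0 hed tal E K S n obs i * ln (\<xi> i)))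
    \<and> (\<forall>\<theta> \<in> Theta_space E. \<forall>i \<in> E. \<not> is_leaf hed tal E i \<longrightarrow>
         Lambda hed tal E (Gamma hed tal E \<theta>) i = ln (cond_prob_pass hed tal E \<theta> i))"
proof -
  interpret mnet hed tal E K S by unfold_locales (rule net)
  have inj: "inj_on (Lambda hed tal E) (Xi_space hed tal E)" by (rule Lambda_inj)
  have inv: "inv_into (Xi_space hed tal E) (Lambda hed tal E) (Lambda hed tal E (Gamma hed tal E \<theta>)) = Gamma hed tal E \<theta>"
    if "\<theta> \<in> Theta_space E" for \<theta>
    using inj that by (intro inv_into_f_f) (auto simp: Xi_space_def)
  show ?thesis
    using inj_on_imp_bij_betw[OF inj] main2 main3 main4 inv by (simp add: Let_def)
qed


end
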